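(* Let $K\ge2$ and consider a rotation-invariant random point process on the discrete circle with holes $1,\dots,K$ (clockwise), with $\mathbb P(\text{particle at hole }K)>0$. Let $W$ be the smallest index $l\in\{1,\dots,K\}$ such that hole $l$ is occupied, $g(L)=\mathbb P(W=L)$, and $\Delta g(L)=g(L+1)-g(L)$ with $g(K+1)=0$. Then for every $L\in\{1,\dots,K\}$, $$-\Delta g(L)=\mathbb P\big(\text{there is a particle at hole }K\text{ and the clockwise distance from hole }K\text{ to the next occupied hole equals }L\big).$$
   Context: Adjacent holes are at distance 1; if hole $K$ is the only occupied hole, the distance to the next occupied hole is $K$. *)

theory Defs
  imports "HOL-Probability.Probability"
begin

text \<open>Holes of the discrete circle are 1,...,K (clockwise). A configuration is the
set of occupied holes. The hole at clockwise distance d from hole i is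
(i - 1 + d) mod K + 1.\<close>

definition hole_at :: "nat \<Rightarrow> nat \<Rightarrow> nat \<Rightarrow> nat" where
  "hole_at K i d = (i - 1 + d) mod K + 1"

definition rot :: "nat \<Rightarrow> nat set \<Rightarrow> nat set" where
  "rot K S = (\<lambda>i. hole_at K i 1) ` S"

definition rot_invariant_process :: "nat \<Rightarrow> nat set pmf \<Rightarrow> bool" where
  "rot_invariant_process K p \<longleftrightarrow>
     (\<forall>S \<in> set_pmf p. S \<subseteq> {1..K}) \<and> map_pmf (rot K) p = p"

text \<open>W: smallest occupied index (only meaningful for nonempty configurations).\<close>
definition first_occ :: "nat set \<Rightarrow> nat" where
  "first_occ S = Min S"

definition dist_next :: "nat \<Rightarrow> nat set \<Rightarrow> nat \<Rightarrow> nat" where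
  "dist_next K S i = (LEAST d. 1 \<le> d \<and> hole_at K i d \<in> S)"

definition gW :: "nat set pmf \<Rightarrow> nat \<Rightarrow> real" where
  "gW p L = measure_pmf.prob p {S. S \<noteq> {} \<and> first_occ S = L}"

end

theory Submission
  imports Defs
begin

lemma hole_K: "1 \<le> d \<Longrightarrow> d \<le> K \<Longrightarrow> hole_at K K d = d"
proof -
  assume a: "1 \<le> d" "d \<le> K"
  show ?thesis
  proof (cases "d = K")
    case True
    have "K - 1 + K = (K - 1) + 1 * K" by simp
    then have "(K - 1 + K) mod K = (K - 1) mod K" by (metis mod_mult_self1)
    then show ?thesis using True a by (simp add: hole_at_def)
  next
    case False
    then have "K - 1 + d = (d - 1) + 1 * K" using a by simp
    then have "(K - 1 + d) mod K = (d - 1) mod K" by (metis mod_mult_self1)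
    then show ?thesis using False a by (simp add: hole_at_def)
  qed
qed

lemma dist_K:
  assumes "S \<subseteq> {1..K}" "K \<in> S"
  shows "dist_next K S K = Min S"
proof -
  have fin: "finite S" using assms(1) finite_subset by blast
  have m: "Min S \<in> S" using fin assms(2) by (metis Min_in empty_iff)
  have m1: "1 \<le> Min S" "Min S \<le> K" using m assms(1) by auto
  show ?thesis unfolding dist_next_def
  proof (rule Least_equality)
    show "1 \<le> Min S \<and> hole_at K K (Min S) \<in> S" using m m1 hole_K by simp
  next
    fix y assume y: "1 \<le> y \<and> hole_at K K y \<in> S"
    show "Min S \<le> y"
    proof (cases "y \<le> K")
      case True
      then have "y \<in> S" using y hole_K by metis
      then show ?thesis using fin by simp
    next
      case False then show ?thesis using m1 by simp
    qed
  qed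
qed

lemma rot_char:
  assumes "S \<subseteq> {1..K}" "K \<ge> 2" "L \<ge> 1"
  shows "(rot K S \<noteq> {} \<and> Min (rot K S) = L + 1) \<longleftrightarrow> (K \<notin> S \<and> S \<noteq> {} \<and> Min S = L)"
proof -
  have fin: "finite S" using assms(1) finite_subset by blast
  show ?thesis
  proof (cases "K \<in> S")
    case True
    have "hole_at K K 1 = 1" using hole_K assms by simp
    then have "1 \<in> rot K S" using True unfolding rot_def by force
    moreover have "finite (rot K S)" using fin unfolding rot_def by simp
    ultimately have "Min (rot K S) \<le> 1" by simp
    then show ?thesis using True assms by auto
  next
    case False
    have "\<And>i. i \<in> S \<Longrightarrow> hole_at K i 1 = Suc i"
    proof -
      fix i assume "i \<in> S"
      then have "1 \<le> i" "i \<le> K" "i \<noteq> K" using assms(1) False by auto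
      then have "1 \<le> i" "i < K" by auto
      then show "hole_at K i 1 = Suc i" by (simp add: hole_at_def)
    qed
    then have r: "rot K S = Suc ` S" unfolding rot_def by (auto simp: image_iff)
    show ?thesis
    proof (cases "S = {}")
      case True then show ?thesis using r by simp
    next
      case ne: False
      have "Min (Suc ` S) = Suc (Min S)"
        using fin ne by (simp add: mono_Min_commute[symmetric] mono_def)
      then show ?thesis using r ne False by simp
    qed
  qed
qed

theorem lemma4p3:
  fixes K :: nat and p :: "nat set pmf"
  assumes "K \<ge> 2"
    and "rot_invariant_process K p"
    and "measure_pmf.prob p {S. K \<in> S} > 0"
    and "L \<in> {1..K}"
  shows "- (gW p (L + 1) - gW p L)
           = measure_pmf.prob p {S. K \<in> S \<and> dist_next K S K = L}"
proof -
  have sub: "\<And>S. S \<in> set_pmf p \<Longrightarrow> S \<subseteq> {1..K}" using assms(2) unfolding rot_invariant_process_def by blast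
  have inv: "map_pmf (rot K) p = p" using assms(2) unfolding rot_invariant_process_def by blast
  have L1: "L \<ge> 1" using assms(4) by simp
  define A where "A = {S. K \<in> S \<and> Min S = L}"
  define B where "B = {S. K \<notin> S \<and> S \<noteq> {} \<and> Min S = L}"
  have "gW p (L+1) = measure_pmf.prob (map_pmf (rot K) p) {S. S \<noteq> {} \<and> first_occ S = L + 1}"
    unfolding gW_def using inv by simp
  also have "\<dots> = measure_pmf.prob p ({S. rot K S \<noteq> {} \<and> Min (rot K S) = L + 1} \<inter> set_pmf p)"
    by (simp add: measure_Int_set_pmf first_occ_def vimage_def)
  also have "{S. rot K S \<noteq> {} \<and> Min (rot K S) = L + 1} \<inter> set_pmf p = B \<inter> set_pmf p"
    using rot_char[OF sub assms(1) L1] unfolding B_def by blast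
  also have "measure_pmf.prob p (B \<inter> set_pmf p) = measure_pmf.prob p B"
    by (simp add: measure_Int_set_pmf)
  finally have g1: "gW p (L+1) = measure_pmf.prob p B" .
  have "{S. S \<noteq> {} \<and> first_occ S = L} = A \<union> B" unfolding A_def B_def first_occ_def by auto
  moreover have "A \<inter> B = {}" unfolding A_def B_def by auto
  ultimately have g0: "gW p L = measure_pmf.prob p A + measure_pmf.prob p B"
    unfolding gW_def by (simp add: measure_pmf.finite_measure_Union)
  have "measure_pmf.prob p {S. K \<in> S \<and> dist_next K S K = L}
      = measure_pmf.prob p ({S. K \<in> S \<and> dist_next K S K = L} \<inter> set_pmf p)"
    by (simp add: measure_Int_set_pmf)
  also have "{S. K \<in> S \<and> dist_next K S K = L} \<inter> set_pmf p = A \<inter> set_pmf p"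
    unfolding A_def using dist_K[OF sub] by auto
  also have "measure_pmf.prob p (A \<inter> set_pmf p) = measure_pmf.prob p A"
    by (simp add: measure_Int_set_pmf)
  finally show ?thesis using g0 g1 by simp
qed

end
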